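(* Let $\mathcal{L}_1:\mathcal{M}_{d_1}\to\mathcal{M}_{d_1}$ and $\mathcal{L}_2:\mathcal{M}_{d_2}\to\mathcal{M}_{d_2}$ be unital, reversible Liouvillians with almost commuting unitary eigenbases associated to finite abelian groups $G_1$ and $G_2$, and let $P^1_t$, $P^2_t$ be the associated classical semigroups acting on $V(G_1)$, $V(G_2)$. Then for all $t\geq0$, $$\|e^{t\mathcal{L}_1}\otimes e^{t\mathcal{L}_2}\|_{2\to4,\frac{\mathbb{1}}{d_1d_2}}\leq\|P^1_t\otimes P^2_t\|_{2\to4}.$$
   Context: A Liouvillian generates a semigroup of completely positive trace-preserving maps; unital: $\mathcal{L}(\mathbb{1})=0$; reversible: self-adjoint w.r.t. the Hilbert–Schmidt inner product. An almost commuting unitary eigenbasis of $\mathcal{L}$ on $\mathcal{M}_d$ associated to a finite abelian group $G$ ($|G|=d^2$) consists of unitaries $\{U_i\}_{i\in G}$ with $U_0=\mathbb{1}$, $\mathcal{L}(U_i)=\lambda_iU_i$, $\text{tr}(U_i^\dagger U_j)=d\delta_{ij}$, and $U_iU_j=\phi(i,j)U_jU_i=\phi'(i,j)U_{i+j}$ with unimodular phases. Fix an isomorphism $i\mapsto\chi_i$ of $G$ onto its character group. $V(G)$ = functions $G\to\mathbb{C}$, $\|f\|_p^p=\frac1{|G|}\sum_g|f(g)|^p$, $\hat f(i)=\frac1{|G|}\sum_g\overline{\chi_i(g)}f(g)$; the associated classical semigroup is $P_tf=\sum_i e^{\lambda_it}\hat f(i)\chi_i$. $V(G_1)\otimes V(G_2)\cong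 V(G_1\times G_2)$ with the corresponding norm; $\|A\|_{2\to4}=\sup_{f\ne0}\|Af\|_4/\|f\|_2$. On $\mathcal{M}_D$ ($D=d_1d_2$): $\|Y\|_{p,\frac{\mathbb{1}}{D}}=D^{-1/p}(\text{tr}|Y|^p)^{1/p}$ and $\|S\|_{2\to4,\frac{\mathbb{1}}{D}}=\sup_{X\ne0}\|S(X)\|_{4,\frac{\mathbb{1}}{D}}/\|X\|_{2,\frac{\mathbb{1}}{D}}$. *)

theory Defs
  imports "HOL-Analysis.Analysis"
begin

section \<open>Matrices M_d as complex^'n^'n, d = CARD('n)\<close>

definition cscale :: "complex \<Rightarrow> complex^'n^'m \<Rightarrow> complex^'n^'m" where
  "cscale c A = (\<chi> i j. c * A $ i $ j)"

definition adj :: "complex^'n^'m \<Rightarrow> complex^'m^'n" where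
  "adj A = (\<chi> i j. cnj (A $ j $ i))"

definition unitary_mat :: "complex^'n^'n \<Rightarrow> bool" where
  "unitary_mat U \<longleftrightarrow> U ** adj U = mat 1 \<and> adj U ** U = mat 1"

definition mat_unit :: "'n \<Rightarrow> 'n \<Rightarrow> complex^'n^'n" where
  "mat_unit a b = (\<chi> i j. if i = a \<and> j = b then 1 else 0)"

definition kron :: "complex^'n^'n \<Rightarrow> complex^'m^'m \<Rightarrow> complex^('n \<times> 'm)^('n \<times> 'm)" where
  "kron A B = (\<chi> p q. A $ fst p $ fst q * B $ snd p $ snd q)"

text \<open>Tensor product of two (linear) superoperators, determined by (S1 (x) S2)(A (x) B) = S1 A (x) S2 B.\<close>
definition super_tensor ::
  "(complex^'n^'n \<Rightarrow> complex^'n^'n) \<Rightarrow> (complex^'m^'m \<Rightarrow> complex^'m^'m)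
    \<Rightarrow> complex^('n \<times> 'm)^('n \<times> 'm) \<Rightarrow> complex^('n \<times> 'm)^('n \<times> 'm)" where
  "super_tensor S1 S2 X =
     (\<Sum>i\<in>UNIV. \<Sum>j\<in>UNIV. \<Sum>k\<in>UNIV. \<Sum>l\<in>UNIV.
        cscale (X $ (i, k) $ (j, l)) (kron (S1 (mat_unit i j)) (S2 (mat_unit k l))))"

definition clinear_so :: "(complex^'n^'n \<Rightarrow> complex^'n^'n) \<Rightarrow> bool" where
  "clinear_so L \<longleftrightarrow> (\<forall>X Y. L (X + Y) = L X + L Y) \<and> (\<forall>c X. L (cscale c X) = cscale c (L X))"

definition exp_so :: "real \<Rightarrow> (complex^'n^'n \<Rightarrow> complex^'n^'n) \<Rightarrow> complex^'n^'n \<Rightarrow> complex^'n^'n" where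
  "exp_so t L X = (\<Sum>n. (t ^ n / fact n) *\<^sub>R (L ^^ n) X)"

text \<open>Positive semidefiniteness of a block matrix in M_k(M_d) (blocks indexed by a, b < k).\<close>
definition psd_block :: "nat \<Rightarrow> (nat \<Rightarrow> nat \<Rightarrow> complex^'n^'n) \<Rightarrow> bool" where
  "psd_block k X \<longleftrightarrow> (\<forall>v :: nat \<Rightarrow> complex^'n.
     (let q = (\<Sum>a<k. \<Sum>b<k. \<Sum>i\<in>UNIV. \<Sum>j\<in>UNIV. cnj (v a $ i) * X a b $ i $ j * v b $ j)
      in Im q = 0 \<and> Re q \<ge> 0))"

definition completely_positive :: "(complex^'n^'n \<Rightarrow> complex^'n^'n) \<Rightarrow> bool" where
  "completely_positive \<Phi> \<longleftrightarrow>
     (\<forall>k X. psd_block k X \<longrightarrow> psd_block k (\<lambda>a b. \<Phi> (X a b)))"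

definition trace_preserving :: "(complex^'n^'n \<Rightarrow> complex^'n^'n) \<Rightarrow> bool" where
  "trace_preserving \<Phi> \<longleftrightarrow> (\<forall>X. trace (\<Phi> X) = trace X)"

definition liouvillian :: "(complex^'n^'n \<Rightarrow> complex^'n^'n) \<Rightarrow> bool" where
  "liouvillian L \<longleftrightarrow> clinear_so L \<and>
     (\<forall>t\<ge>0. completely_positive (exp_so t L) \<and> trace_preserving (exp_so t L))"

definition unital_so :: "(complex^'n^'n \<Rightarrow> complex^'n^'n) \<Rightarrow> bool" where
  "unital_so L \<longleftrightarrow> L (mat 1) = 0"

text \<open>Self-adjoint w.r.t. the Hilbert-Schmidt inner product (X,Y) = tr(X^* Y).\<close>
definition reversible_so :: "(complex^'n^'n \<Rightarrow> complex^'n^'n) \<Rightarrow> bool" where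
  "reversible_so L \<longleftrightarrow> (\<forall>X Y. trace (adj (L X) ** Y) = trace (adj X ** L Y))"

definition acu_eigenbasis ::
  "(complex^'n^'n \<Rightarrow> complex^'n^'n) \<Rightarrow> ('g::{finite,ab_group_add} \<Rightarrow> complex^'n^'n)
     \<Rightarrow> ('g \<Rightarrow> complex) \<Rightarrow> bool" where
  "acu_eigenbasis L U lam \<longleftrightarrow>
     CARD('g) = CARD('n)^2 \<and>
     U 0 = mat 1 \<and>
     (\<forall>i. unitary_mat (U i)) \<and>
     (\<forall>i. L (U i) = cscale (lam i) (U i)) \<and>
     (\<forall>i j. trace (adj (U i) ** U j) = (if i = j then of_nat CARD('n) else 0)) \<and>
     (\<forall>i j. \<exists>\<phi> \<phi>'. cmod \<phi> = 1 \<and> cmod \<phi>' = 1 \<and>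
        U i ** U j = cscale \<phi> (U j ** U i) \<and> U i ** U j = cscale \<phi>' (U (i + j)))"

definition qnorm2 :: "complex^'n^'n \<Rightarrow> real" where
  "qnorm2 Y = (Re (trace (adj Y ** Y)) / real CARD('n)) powr (1/2)"

definition qnorm4 :: "complex^'n^'n \<Rightarrow> real" where
  "qnorm4 Y = (Re (trace ((adj Y ** Y) ** (adj Y ** Y))) / real CARD('n)) powr (1/4)"

definition qnorm_2to4 :: "(complex^'n^'n \<Rightarrow> complex^'n^'n) \<Rightarrow> real" where
  "qnorm_2to4 S = Sup {qnorm4 (S X) / qnorm2 X | X. X \<noteq> 0}"

section \<open>Classical side: V(G) = 'g \<Rightarrow> complex\<close>

definition is_character :: "('g::ab_group_add \<Rightarrow> complex) \<Rightarrow> bool" where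
  "is_character \<psi> \<longleftrightarrow> (\<forall>a b. \<psi> (a + b) = \<psi> a * \<psi> b) \<and> (\<forall>a. cmod (\<psi> a) = 1)"

definition char_iso :: "('g::ab_group_add \<Rightarrow> 'g \<Rightarrow> complex) \<Rightarrow> bool" where
  "char_iso ch \<longleftrightarrow> (\<forall>i j. ch (i + j) = (\<lambda>g. ch i g * ch j g)) \<and>
                   bij_betw ch UNIV {\<psi>. is_character \<psi>}"

definition cnorm :: "nat \<Rightarrow> ('g::finite \<Rightarrow> complex) \<Rightarrow> real" where
  "cnorm p f = ((\<Sum>g\<in>UNIV. cmod (f g) ^ p) / real CARD('g)) powr (1 / real p)"

definition cnorm_2to4 :: "(('g::finite \<Rightarrow> complex) \<Rightarrow> ('g \<Rightarrow> complex)) \<Rightarrow> real" where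
  "cnorm_2to4 A = Sup {cnorm 4 (A f) / cnorm 2 f | f. f \<noteq> (\<lambda>_. 0)}"

definition fourier :: "('g::finite \<Rightarrow> 'g \<Rightarrow> complex) \<Rightarrow> ('g \<Rightarrow> complex) \<Rightarrow> 'g \<Rightarrow> complex" where
  "fourier ch f i = (\<Sum>g\<in>UNIV. cnj (ch i g) * f g) / of_nat CARD('g)"

definition classical_sg ::
  "('g::finite \<Rightarrow> 'g \<Rightarrow> complex) \<Rightarrow> ('g \<Rightarrow> complex) \<Rightarrow> real \<Rightarrow> ('g \<Rightarrow> complex) \<Rightarrow> 'g \<Rightarrow> complex" where
  "classical_sg ch lam t f = (\<lambda>g. \<Sum>i\<in>UNIV. exp (lam i * of_real t) * fourier ch f i * ch i g)"

definition delta_fun :: "'g \<Rightarrow> 'g \<Rightarrow> complex" where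
  "delta_fun h = (\<lambda>g. if g = h then 1 else 0)"

text \<open>Tensor product A (x) B acting on V(G1) (x) V(G2) = V(G1 \<times> G2), with (f1 (x) f2)(g1,g2) = f1 g1 * f2 g2.\<close>
definition fun_tensor ::
  "(('a::finite \<Rightarrow> complex) \<Rightarrow> ('a \<Rightarrow> complex)) \<Rightarrow> (('b::finite \<Rightarrow> complex) \<Rightarrow> ('b \<Rightarrow> complex))
     \<Rightarrow> ('a \<times> 'b \<Rightarrow> complex) \<Rightarrow> ('a \<times> 'b \<Rightarrow> complex)" where
  "fun_tensor A B F = (\<lambda>(g1, g2). \<Sum>h1\<in>UNIV. \<Sum>h2\<in>UNIV.
       F (h1, h2) * A (delta_fun h1) g1 * B (delta_fun h2) g2)"

end

theory Submission
  imports Defs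
begin

lemma cscale_nth[simp]: "cscale c A $ i $ j = c * A $ i $ j"
  by (simp add: cscale_def)
lemma adj_nth[simp]: "adj A $ i $ j = cnj (A $ j $ i)"
  by (simp add: adj_def)
lemma mm_nth: "(A ** B) $ i $ j = (\<Sum>k\<in>UNIV. A $ i $ k * B $ k $ j)"
  by (simp add: matrix_matrix_mult_def)
lemma kron_nth[simp]: "kron A B $ p $ q = A $ fst p $ fst q * B $ snd p $ snd q"
  by (simp add: kron_def)
lemma sum_nth2[simp]: "(sum f S) $ i $ j = (\<Sum>a\<in>S. f a $ i $ j)"
  by simp

lemma trace_cscale[simp]: "trace (cscale c A) = c * trace A"
  by (simp add: trace_def sum_distrib_left)
lemma trace_sum: "trace (sum f S) = (\<Sum>a\<in>S. trace (f a))"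
  unfolding trace_def by (simp add: sum.swap[of _ S])
lemma cscale_mm_left[simp]: "cscale c A ** B = cscale c (A ** B)"
  by (simp add: vec_eq_iff mm_nth sum_distrib_left mult.assoc)
lemma cscale_mm_right[simp]: "A ** cscale c B = cscale c (A ** B)"
  by (simp add: vec_eq_iff mm_nth sum_distrib_left mult_ac)
lemma adj_cscale[simp]: "adj (cscale c A) = cscale (cnj c) (adj A)"
  by (simp add: vec_eq_iff)
lemma adj_mm: "adj (A ** B) = adj B ** adj A"
  by (simp add: vec_eq_iff mm_nth mult.commute)
lemma adj_adj[simp]: "adj (adj A) = A"
  by (simp add: vec_eq_iff)
lemma adj_mat1[simp]: "adj (mat 1 :: complex^'n^'n) = mat 1"
  by (simp add: vec_eq_iff mat_def)
lemma cscale_cscale[simp]: "cscale a (cscale b A) = cscale (a*b) A"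
  by (simp add: vec_eq_iff)
lemma cscale_one[simp]: "cscale 1 A = A"
  by (simp add: vec_eq_iff)
lemma cscale_zero[simp]: "cscale 0 A = 0" "cscale c 0 = 0"
  by (simp_all add: vec_eq_iff)
lemma cscale_add: "cscale c (A + B) = cscale c A + cscale c B"
  by (simp add: vec_eq_iff distrib_left)
lemma cscale_sum: "cscale c (sum f S) = (\<Sum>a\<in>S. cscale c (f a))"
  by (simp add: vec_eq_iff sum_distrib_left)
lemma sum_cscale_left: "(\<Sum>a\<in>S. cscale (f a) A) = cscale (sum f S) A"
  by (simp add: vec_eq_iff sum_distrib_right)
lemma mm_sum_left: "(sum f S) ** B = (\<Sum>a\<in>S. f a ** B)"
  by (simp add: vec_eq_iff mm_nth sum_distrib_right sum.swap[of _ S])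
lemma mm_sum_right: "B ** (sum f S) = (\<Sum>a\<in>S. B ** f a)"
  by (simp add: vec_eq_iff mm_nth sum_distrib_left sum.swap[of _ S])
lemma adj_sum: "adj (sum f S) = (\<Sum>a\<in>S. adj (f a))"
  by (simp add: vec_eq_iff)
lemma adj_add: "adj (A + B) = adj A + adj B"
  by (simp add: vec_eq_iff)
lemma trace_mm_commute: "trace (A ** B) = trace (B ** (A :: complex^'n^'n))"
  unfolding trace_def mm_nth by (subst sum.swap) (simp add: mult.commute)

lemma sum_UNIV_prod: "(\<Sum>k\<in>(UNIV::('a::finite\<times>'b::finite) set). f k) = (\<Sum>i\<in>UNIV. \<Sum>j\<in>UNIV. f (i,j))"
  by (simp add: sum.cartesian_product UNIV_Times_UNIV[symmetric] del: UNIV_Times_UNIV)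

lemma kron_mm: "kron A B ** kron C D = kron (A ** C) (B ** D)"
  by (simp add: vec_eq_iff mm_nth sum_UNIV_prod sum_product mult_ac)
lemma adj_kron: "adj (kron A B) = kron (adj A) (adj B)"
  by (simp add: vec_eq_iff)
lemma trace_kron: "trace (kron A B) = trace A * trace B"
  by (simp add: trace_def sum_UNIV_prod sum_product)
lemma kron_cscale: "kron (cscale a A) (cscale b B) = cscale (a*b) (kron A B)"
  by (simp add: vec_eq_iff mult_ac)
lemma kron_mat1: "kron (mat 1) (mat 1) = mat 1"
  by (simp add: vec_eq_iff mat_def prod_eq_iff)

lemma orth_expand:
  fixes S :: "'a::euclidean_space set"
  assumes po: "pairwise orthogonal S" and z: "0 \<notin> S" and c: "card S = DIM('a)"
  shows "x = (\<Sum>b\<in>S. (b \<bullet> x / (b \<bullet> b)) *\<^sub>R b)"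
proof -
  have fin: "finite S" using po pairwise_orthogonal_imp_finite by blast
  have ind: "independent S" using pairwise_orthogonal_independent[OF po z] .
  have "UNIV \<subseteq> span S"
    by (rule card_ge_dim_independent[OF subset_UNIV ind]) (simp add: c)
  then have "x - (\<Sum>b\<in>S. (b \<bullet> x / (b \<bullet> b)) *\<^sub>R b) \<in> span S" by blast
  from Gram_Schmidt_step[OF po this, of x]
  have "orthogonal (x - (\<Sum>b\<in>S. (b \<bullet> x / (b \<bullet> b)) *\<^sub>R b)) (x - (\<Sum>b\<in>S. (b \<bullet> x / (b \<bullet> b)) *\<^sub>R b))" .
  then show ?thesis by (simp add: orthogonal_def)
qed

lemma inner_mat: "(X::complex^'m^'m) \<bullet> Y = Re (trace (adj Y ** X))"
proof -
  have "X \<bullet> Y = (\<Sum>i\<in>UNIV. \<Sum>j\<in>UNIV. X $ i $ j \<bullet> Y $ i $ j)"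
    unfolding inner_vec_def by simp
  also have "\<dots> = (\<Sum>i\<in>UNIV. \<Sum>j\<in>UNIV. Re (cnj (Y $ i $ j) * X $ i $ j))"
    by (simp add: inner_complex_def mult.commute)
  also have "\<dots> = Re (\<Sum>i\<in>UNIV. \<Sum>j\<in>UNIV. cnj (Y $ i $ j) * X $ i $ j)"
    by (simp add: Re_sum)
  also have "\<dots> = Re (trace (adj Y ** X))"
    unfolding trace_def mm_nth adj_nth by (subst sum.swap) simp
  finally show ?thesis .
qed

lemma trace_adj: "trace (adj A) = cnj (trace (A::complex^'m^'m))"
  by (simp add: trace_def)
lemma trace_adj_swap: "trace (adj X ** Y) = cnj (trace (adj Y ** (X::complex^'m^'m)))"
proof -
  have "trace (adj X ** Y) = trace (adj (adj Y ** X))" by (simp add: adj_mm)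
  then show ?thesis by (simp add: trace_adj)
qed
lemma Re_trace_swap: "Re (trace (adj X ** Y)) = Re (trace (adj Y ** (X::complex^'m^'m)))"
proof -
  have "trace (adj X ** Y) = trace (adj (adj Y ** X))" by (simp add: adj_mm)
  then show ?thesis by (simp add: trace_adj)
qed

lemma aux_cplx: "complex_of_real (Re t / D) * v + complex_of_real (Im t / D) * (\<i> * v) = t / complex_of_real D * v"
proof -
  have "t = complex_of_real (Re t) + \<i> * complex_of_real (Im t)" by (simp add: complex_eq_iff)
  then have "t / complex_of_real D * v = (complex_of_real (Re t) + \<i> * complex_of_real (Im t)) / complex_of_real D * v" by simp
  also have "\<dots> = complex_of_real (Re t / D) * v + complex_of_real (Im t / D) * (\<i> * v)"
    by (simp add: divide_simps algebra_simps) 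
  finally show ?thesis by simp
qed
lemma scaleR_nth2: "(r *\<^sub>R (A::complex^'m^'n)) $ i $ j = complex_of_real r * A $ i $ j"
  by (simp only: vector_scaleR_component) (simp add: scaleR_conv_of_real)

lemma mat_expand:
  fixes V :: "'g::finite \<Rightarrow> complex^'m^'m" and D :: real
  assumes orth: "\<And>a b. trace (adj (V a) ** V b) = (if a = b then complex_of_real D else 0)"
    and D: "D > 0" and card: "CARD('g) = CARD('m)^2"
  shows "X = (\<Sum>a\<in>UNIV. cscale (trace (adj (V a) ** X) / D) (V a))"
proof -
  define f :: "'g \<times> bool \<Rightarrow> complex^'m^'m" where
    "f p = (if snd p then V (fst p) else cscale \<i> (V (fst p)))" for p
  have ff: "f p \<bullet> f q = (if p = q then D else 0)" for p q
    by (cases p; cases q) (auto simp: f_def inner_mat orth)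
  have inj: "inj f"
  proof (rule injI)
    fix p q assume "f p = f q"
    then have "f p \<bullet> f q = D" using ff[of p p] by simp
    then show "p = q" using ff[of p q] D by (auto split: if_splits)
  qed
  have po: "pairwise orthogonal (range f)"
    unfolding pairwise_def orthogonal_def using ff by auto
  have z: "0 \<notin> range f"
  proof
    assume "0 \<in> range f" then obtain p where "f p = 0" by auto
    then show False using ff[of p p] D by simp
  qed
  have c: "card (range f) = DIM(complex^'m^'m)"
    using card_image[OF inj] by (simp add: card card_UNIV_bool power2_eq_square)
  have "X = (\<Sum>b\<in>range f. (b \<bullet> X / (b \<bullet> b)) *\<^sub>R b)"
    by (rule orth_expand[OF po z c])
  also have "\<dots> = (\<Sum>p\<in>UNIV. (f p \<bullet> X / D) *\<^sub>R f p)"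
    by (simp add: sum.reindex[OF inj] ff)
  also have "\<dots> = (\<Sum>a\<in>UNIV. (f (a,True) \<bullet> X / D) *\<^sub>R f (a,True) + (f (a,False) \<bullet> X / D) *\<^sub>R f (a,False))"
    by (simp add: sum_UNIV_prod UNIV_bool add.commute)
  also have "\<dots> = (\<Sum>a\<in>UNIV. cscale (trace (adj (V a) ** X) / D) (V a))"
  proof (rule sum.cong[OF refl])
    fix a
    show "(f (a,True) \<bullet> X / D) *\<^sub>R f (a,True) + (f (a,False) \<bullet> X / D) *\<^sub>R f (a,False)
        = cscale (trace (adj (V a) ** X) / D) (V a)"
    proof -
      have t1: "f (a,True) \<bullet> X = Re (trace (adj (V a) ** X))"
        by (simp add: f_def inner_mat Re_trace_swap[of X])
      have t2: "f (a,False) \<bullet> X = Im (trace (adj (V a) ** X))"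
        by (simp add: f_def inner_mat trace_adj_swap[of X])
      have e: "((Re t/D) *\<^sub>R (V a) + (Im t/D) *\<^sub>R cscale \<i> (V a)) = cscale (t/D) (V a)" for t
        by (simp only: vec_eq_iff vector_add_component scaleR_nth2 cscale_nth aux_cplx) simp
      show ?thesis
        using t1 t2 e[of "trace (adj (V a) ** X)"] by (simp add: f_def)
    qed
  qed
  finally show ?thesis .
qed

lemma clin_zero: "clinear_so L \<Longrightarrow> L 0 = 0"
  unfolding clinear_so_def by (metis cscale_zero(1))

lemma clin_sum: "clinear_so L \<Longrightarrow> L (sum f S) = (\<Sum>a\<in>S. L (f a))"
  by (induction S rule: infinite_finite_induct)
     (auto simp: clin_zero, auto simp: clinear_so_def)

lemma sR_c: "r *\<^sub>R (z::complex) = of_real r * z" by (simp add: scaleR_conv_of_real)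

lemma clin_cscale: "clinear_so L \<Longrightarrow> L (cscale c X) = cscale c (L X)"
  unfolding clinear_so_def by blast

lemma acu_orth: "acu_eigenbasis L U lam \<Longrightarrow>
   trace (adj (U a) ** U b) = (if a = b then complex_of_real (real CARD('n)) else 0)"
  for U :: "'g::{finite,ab_group_add} \<Rightarrow> complex^'n^'n"
  unfolding acu_eigenbasis_def by simp

lemma acu_expand:
  fixes U :: "'g::{finite,ab_group_add} \<Rightarrow> complex^'n^'n"
  assumes "acu_eigenbasis L U lam"
  shows "X = (\<Sum>a\<in>UNIV. cscale (trace (adj (U a) ** X) / real CARD('n)) (U a))"
proof -
  have c: "CARD('g) = CARD('n)^2" using assms unfolding acu_eigenbasis_def by simp
  show ?thesis
    by (rule mat_expand[OF acu_orth[OF assms] _ c]) simp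
qed

lemma pow_expand:
  fixes U :: "'g::{finite,ab_group_add} \<Rightarrow> complex^'n^'n"
  assumes lin: "clinear_so L" and ev: "\<And>a. L (U a) = cscale (lam a) (U a)"
    and X: "X = (\<Sum>a\<in>UNIV. cscale (c a) (U a))"
  shows "(L ^^ n) X = (\<Sum>a\<in>UNIV. cscale (c a * lam a ^ n) (U a))"
proof (induction n)
  case 0 then show ?case using X by simp
next
  case (Suc n)
  have "(L ^^ Suc n) X = L ((L ^^ n) X)" by simp
  also have "\<dots> = (\<Sum>a\<in>UNIV. cscale (c a * lam a ^ n) (L (U a)))"
    by (simp add: Suc clin_sum[OF lin] clin_cscale[OF lin])
  also have "\<dots> = (\<Sum>a\<in>UNIV. cscale (c a * lam a ^ Suc n) (U a))"
    by (simp add: ev mult_ac)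
  finally show ?case .
qed

lemma scaleR_cscale: "r *\<^sub>R cscale c A = cscale (complex_of_real r * c) A"
  by (simp add: vec_eq_iff scaleR_nth2 del: vector_scaleR_component)

lemma cscale_blin: "bounded_linear (\<lambda>z. cscale (c * z) (A::complex^'n^'m))"
proof -
  have "linear (\<lambda>z. cscale (c * z) A)"
    by (rule linearI) (simp_all add: vec_eq_iff scaleR_nth2 algebra_simps sR_c
        del: vector_scaleR_component)
  then show ?thesis using linear_conv_bounded_linear by blast
qed

lemma exp_so_expand:
  fixes U :: "'g::{finite,ab_group_add} \<Rightarrow> complex^'n^'n"
  assumes lin: "clinear_so L" and ev: "\<And>a. L (U a) = cscale (lam a) (U a)"
    and X: "X = (\<Sum>a\<in>UNIV. cscale (c a) (U a))"
  shows "exp_so t L X = (\<Sum>a\<in>UNIV. cscale (c a * exp (lam a * of_real t)) (U a))"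
proof -
  have s: "(\<lambda>n. (t ^ n / fact n) *\<^sub>R cscale (c a * lam a ^ n) (U a)) sums
       cscale (c a * exp (lam a * of_real t)) (U a)" for a
  proof -
    have "(\<lambda>n. (lam a * of_real t) ^ n /\<^sub>R fact n) sums exp (lam a * of_real t)"
      by (rule exp_converges)
    from bounded_linear.sums[OF cscale_blin[of "c a" "U a"] this]
    show ?thesis
      by (simp add: scaleR_cscale power_mult_distrib sR_c divide_inverse mult_ac)
  qed
  have "(\<lambda>n. \<Sum>a\<in>UNIV. (t ^ n / fact n) *\<^sub>R cscale (c a * lam a ^ n) (U a)) sums
        (\<Sum>a\<in>UNIV. cscale (c a * exp (lam a * of_real t)) (U a))"
    by (rule sums_sum) (rule s)
  moreover have "(\<lambda>n. (t ^ n / fact n) *\<^sub>R (L ^^ n) X) =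
        (\<lambda>n. \<Sum>a\<in>UNIV. (t ^ n / fact n) *\<^sub>R cscale (c a * lam a ^ n) (U a))"
    by (simp add: pow_expand[OF lin ev X] scaleR_sum_right)
  ultimately show ?thesis unfolding exp_so_def by (simp add: sums_iff)
qed

lemma swap2: "(\<Sum>i\<in>A. \<Sum>a\<in>E. \<Sum>b\<in>F. f i a b) = (\<Sum>a\<in>E. \<Sum>b\<in>F. \<Sum>i\<in>A. f i a b)"
  by (subst sum.swap) (simp add: sum.swap[of _ A])
lemma swap6: "(\<Sum>i\<in>A. \<Sum>j\<in>B. \<Sum>k\<in>C. \<Sum>l\<in>D. \<Sum>a\<in>E. \<Sum>b\<in>F. f i j k l a b) = (\<Sum>a\<in>E. \<Sum>b\<in>F. \<Sum>i\<in>A. \<Sum>j\<in>B. \<Sum>k\<in>C. \<Sum>l\<in>D. f i j k l a b)"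
proof -
  have s1: "\<And>i j k. (\<Sum>l\<in>D. \<Sum>a\<in>E. \<Sum>b\<in>F. f i j k l a b) = (\<Sum>a\<in>E. \<Sum>b\<in>F. \<Sum>l\<in>D. f i j k l a b)" by (rule swap2)
  have s2: "\<And>i j. (\<Sum>k\<in>C. \<Sum>a\<in>E. \<Sum>b\<in>F. \<Sum>l\<in>D. f i j k l a b) = (\<Sum>a\<in>E. \<Sum>b\<in>F. \<Sum>k\<in>C. \<Sum>l\<in>D. f i j k l a b)" by (rule swap2)
  have s3: "\<And>i. (\<Sum>j\<in>B. \<Sum>a\<in>E. \<Sum>b\<in>F. \<Sum>k\<in>C. \<Sum>l\<in>D. f i j k l a b) = (\<Sum>a\<in>E. \<Sum>b\<in>F. \<Sum>j\<in>B. \<Sum>k\<in>C. \<Sum>l\<in>D. f i j k l a b)" by (rule swap2)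
  have s4: "(\<Sum>i\<in>A. \<Sum>a\<in>E. \<Sum>b\<in>F. \<Sum>j\<in>B. \<Sum>k\<in>C. \<Sum>l\<in>D. f i j k l a b) = (\<Sum>a\<in>E. \<Sum>b\<in>F. \<Sum>i\<in>A. \<Sum>j\<in>B. \<Sum>k\<in>C. \<Sum>l\<in>D. f i j k l a b)" by (rule swap2)
  show ?thesis by (simp only: s1 s2 s3 s4)
qed

lemma trace_mat_unit: "trace (adj A ** mat_unit i j) = cnj (A $ i $ j)"
proof -
  have e: "(\<Sum>q\<in>UNIV. cnj (A $ q $ p) * (if q = i \<and> p = j then 1 else 0)) = (if p = j then cnj (A $ i $ j) else 0)" for p
    by (cases "p = j") (simp_all add: if_distrib[of "\<lambda>x. _ * x"] cong: if_cong)
  show ?thesis by (simp add: trace_def mm_nth mat_unit_def e)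
qed

lemma kron_bilin: "kron (\<Sum>a\<in>S. cscale (f a) (A a)) (\<Sum>b\<in>T. cscale (g b) (B b)) =
   (\<Sum>a\<in>S. \<Sum>b\<in>T. cscale (f a * g b) (kron (A a) (B b)))"
  by (simp add: vec_eq_iff sum_product mult_ac)

lemma trace_W: "trace (adj (kron A B) ** X) =
   (\<Sum>i\<in>UNIV. \<Sum>j\<in>UNIV. \<Sum>k\<in>UNIV. \<Sum>l\<in>UNIV. X $ (i,k) $ (j,l) * cnj (A $ i $ j) * cnj (B $ k $ l))"
proof -
  have "trace (adj (kron A B) ** X) = (\<Sum>j\<in>UNIV. \<Sum>l\<in>UNIV. \<Sum>i\<in>UNIV. \<Sum>k\<in>UNIV. X $ (i,k) $ (j,l) * cnj (A $ i $ j) * cnj (B $ k $ l))"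
    by (simp add: trace_def mm_nth sum_UNIV_prod mult_ac)
  also have "\<dots> = (\<Sum>j\<in>UNIV. \<Sum>i\<in>UNIV. \<Sum>l\<in>UNIV. \<Sum>k\<in>UNIV. X $ (i,k) $ (j,l) * cnj (A $ i $ j) * cnj (B $ k $ l))"
    by (rule sum.cong[OF refl], rule sum.swap)
  also have "\<dots> = (\<Sum>i\<in>UNIV. \<Sum>j\<in>UNIV. \<Sum>l\<in>UNIV. \<Sum>k\<in>UNIV. X $ (i,k) $ (j,l) * cnj (A $ i $ j) * cnj (B $ k $ l))"
    by (rule sum.swap)
  also have "\<dots> = (\<Sum>i\<in>UNIV. \<Sum>j\<in>UNIV. \<Sum>k\<in>UNIV. \<Sum>l\<in>UNIV. X $ (i,k) $ (j,l) * cnj (A $ i $ j) * cnj (B $ k $ l))"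
    by (rule sum.cong[OF refl], rule sum.cong[OF refl], rule sum.swap)
  finally show ?thesis .
qed

lemma super_tensor_expand:
  fixes U1 :: "'g1::finite \<Rightarrow> complex^'n1^'n1" and U2 :: "'g2::finite \<Rightarrow> complex^'n2^'n2"
  assumes E1: "\<And>X. E1 X = (\<Sum>a\<in>UNIV. cscale (trace (adj (U1 a) ** X) / real CARD('n1) * e1 a) (U1 a))"
    and E2: "\<And>X. E2 X = (\<Sum>b\<in>UNIV. cscale (trace (adj (U2 b) ** X) / real CARD('n2) * e2 b) (U2 b))"
  shows "super_tensor E1 E2 X = (\<Sum>a\<in>UNIV. \<Sum>b\<in>UNIV.
     cscale (e1 a * e2 b * trace (adj (kron (U1 a) (U2 b)) ** X) / (real CARD('n1) * real CARD('n2)))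
        (kron (U1 a) (U2 b)))"
proof -
  let ?d1 = "complex_of_real (real CARD('n1))" and ?d2 = "complex_of_real (real CARD('n2))"
  have "super_tensor E1 E2 X = (\<Sum>i\<in>UNIV. \<Sum>j\<in>UNIV. \<Sum>k\<in>UNIV. \<Sum>l\<in>UNIV. \<Sum>a\<in>UNIV. \<Sum>b\<in>UNIV.
      cscale (X $ (i,k) $ (j,l) * ((cnj (U1 a $ i $ j) / ?d1 * e1 a) * (cnj (U2 b $ k $ l) / ?d2 * e2 b)))
        (kron (U1 a) (U2 b)))"
    unfolding super_tensor_def E1 E2 trace_mat_unit kron_bilin cscale_sum by simp
  also have "\<dots> = (\<Sum>a\<in>UNIV. \<Sum>b\<in>UNIV. \<Sum>i\<in>UNIV. \<Sum>j\<in>UNIV. \<Sum>k\<in>UNIV. \<Sum>l\<in>UNIV.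
      cscale (X $ (i,k) $ (j,l) * ((cnj (U1 a $ i $ j) / ?d1 * e1 a) * (cnj (U2 b $ k $ l) / ?d2 * e2 b)))
        (kron (U1 a) (U2 b)))"
    by (rule swap6)
  also have "\<dots> = (\<Sum>a\<in>UNIV. \<Sum>b\<in>UNIV.
     cscale (e1 a * e2 b * trace (adj (kron (U1 a) (U2 b)) ** X) / (real CARD('n1) * real CARD('n2)))
        (kron (U1 a) (U2 b)))"
  proof (intro sum.cong refl)
    fix a b
    have "(\<Sum>i\<in>UNIV. \<Sum>j\<in>UNIV. \<Sum>k\<in>UNIV. \<Sum>l\<in>UNIV.
      X $ (i,k) $ (j,l) * ((cnj (U1 a $ i $ j) / ?d1 * e1 a) * (cnj (U2 b $ k $ l) / ?d2 * e2 b)))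
      = (\<Sum>i\<in>UNIV. \<Sum>j\<in>UNIV. \<Sum>k\<in>UNIV. \<Sum>l\<in>UNIV.
       (e1 a * e2 b / (?d1 * ?d2)) * (X $ (i,k) $ (j,l) * cnj (U1 a $ i $ j) * cnj (U2 b $ k $ l)))"
      by (intro sum.cong refl) (simp add: field_simps)
    also have "\<dots> = e1 a * e2 b * trace (adj (kron (U1 a) (U2 b)) ** X) / (real CARD('n1) * real CARD('n2))"
      by (simp add: trace_W sum_distrib_left sum_divide_distrib)
    finally have e: "(\<Sum>i\<in>UNIV. \<Sum>j\<in>UNIV. \<Sum>k\<in>UNIV. \<Sum>l\<in>UNIV.
      X $ (i,k) $ (j,l) * ((cnj (U1 a $ i $ j) / ?d1 * e1 a) * (cnj (U2 b $ k $ l) / ?d2 * e2 b)))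
      = e1 a * e2 b * trace (adj (kron (U1 a) (U2 b)) ** X) / (real CARD('n1) * real CARD('n2))" .
    show "(\<Sum>i\<in>UNIV. \<Sum>j\<in>UNIV. \<Sum>k\<in>UNIV. \<Sum>l\<in>UNIV.
      cscale (X $ (i,k) $ (j,l) * ((cnj (U1 a $ i $ j) / ?d1 * e1 a) * (cnj (U2 b $ k $ l) / ?d2 * e2 b)))
        (kron (U1 a) (U2 b))) =
     cscale (e1 a * e2 b * trace (adj (kron (U1 a) (U2 b)) ** X) / (real CARD('n1) * real CARD('n2)))
        (kron (U1 a) (U2 b))"
      by (simp only: sum_cscale_left e)
  qed
  finally show ?thesis .
qed

definition grp_basis :: "('g::{finite,ab_group_add} \<Rightarrow> complex^'m^'m) \<Rightarrow> bool" where
  "grp_basis W \<longleftrightarrow> W 0 = mat 1 \<and> (\<forall>a. unitary_mat (W a)) \<and>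
     (\<forall>a b. trace (adj (W a) ** W b) = (if a = b then of_nat CARD('m) else 0)) \<and>
     (\<forall>a b. \<exists>\<phi>. cmod \<phi> = 1 \<and> W a ** W b = cscale \<phi> (W (a + b)))"

lemma acu_grp_basis: "acu_eigenbasis L U lam \<Longrightarrow> grp_basis U"
  unfolding acu_eigenbasis_def grp_basis_def by metis

lemma kron_grp_basis:
  fixes U1 :: "'g1::{finite,ab_group_add} \<Rightarrow> complex^'n1^'n1" and U2 :: "'g2::{finite,ab_group_add} \<Rightarrow> complex^'n2^'n2"
  assumes "grp_basis U1" "grp_basis U2"
  shows "grp_basis (\<lambda>p. kron (U1 (fst p)) (U2 (snd p)))"
proof -
  from assms have a1: "U1 0 = mat 1" "\<And>a. unitary_mat (U1 a)"
     "\<And>a b. trace (adj (U1 a) ** U1 b) = (if a = b then of_nat CARD('n1) else 0)"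
     "\<And>a b. \<exists>\<phi>. cmod \<phi> = 1 \<and> U1 a ** U1 b = cscale \<phi> (U1 (a + b))"
    unfolding grp_basis_def by auto
  from assms have a2: "U2 0 = mat 1" "\<And>a. unitary_mat (U2 a)"
     "\<And>a b. trace (adj (U2 a) ** U2 b) = (if a = b then of_nat CARD('n2) else 0)"
     "\<And>a b. \<exists>\<phi>. cmod \<phi> = 1 \<and> U2 a ** U2 b = cscale \<phi> (U2 (a + b))"
    unfolding grp_basis_def by auto
  have "kron (U1 (fst (0::'g1\<times>'g2))) (U2 (snd (0::'g1\<times>'g2))) = mat 1"
    by (simp add: a1 a2 kron_mat1)
  moreover have "unitary_mat (kron (U1 (fst p)) (U2 (snd p)))" for p
    using a1(2)[of "fst p"] a2(2)[of "snd p"]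
    by (simp add: unitary_mat_def adj_kron kron_mm kron_mat1)
  moreover have "trace (adj (kron (U1 (fst p)) (U2 (snd p))) ** kron (U1 (fst q)) (U2 (snd q)))
      = (if p = q then of_nat CARD('n1 \<times> 'n2) else 0)" for p q
    by (simp add: adj_kron kron_mm trace_kron a1(3) a2(3) prod_eq_iff)
  moreover have "\<exists>\<phi>. cmod \<phi> = 1 \<and> kron (U1 (fst p)) (U2 (snd p)) ** kron (U1 (fst q)) (U2 (snd q))
      = cscale \<phi> (kron (U1 (fst (p + q))) (U2 (snd (p + q))))" for p q
  proof -
    obtain \<phi>1 where p1: "cmod \<phi>1 = 1" "U1 (fst p) ** U1 (fst q) = cscale \<phi>1 (U1 (fst p + fst q))"
      using a1(4) by blast
    obtain \<phi>2 where p2: "cmod \<phi>2 = 1" "U2 (snd p) ** U2 (snd q) = cscale \<phi>2 (U2 (snd p + snd q))"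
      using a2(4) by blast
    show ?thesis
      by (rule exI[of _ "\<phi>1 * \<phi>2"]) (simp add: kron_mm p1 p2 kron_cscale norm_mult)
  qed
  ultimately show ?thesis unfolding grp_basis_def by auto
qed

lemma grp_adj:
  assumes "grp_basis W"
  obtains \<alpha> where "cmod \<alpha> = 1" "adj (W a) = cscale \<alpha> (W (- a))"
proof -
  from assms obtain \<phi> where ph: "cmod \<phi> = 1" "W a ** W (- a) = cscale \<phi> (W (a + - a))"
    unfolding grp_basis_def by blast
  from assms have u: "adj (W a) ** W a = mat 1" and w0: "W 0 = mat 1"
    unfolding grp_basis_def unitary_mat_def by auto
  have "W (- a) = adj (W a) ** (W a ** W (- a))"
    by (simp add: matrix_mul_assoc u)
  also have "\<dots> = cscale \<phi> (adj (W a))" using ph w0 by simp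
  finally have "cscale (cnj \<phi>) (W (- a)) = cscale (cnj \<phi> * \<phi>) (adj (W a))" by simp
  moreover have "cnj \<phi> * \<phi> = 1" using ph(1)
    by (metis complex_norm_square mult.commute norm_one of_real_1 power_one)
  ultimately have "adj (W a) = cscale (cnj \<phi>) (W (- a))" by simp
  then show ?thesis using that[of "cnj \<phi>"] ph(1) by simp
qed

lemma grp_mult:
  assumes "grp_basis W"
  obtains \<phi> where "cmod \<phi> = 1" "W a ** W b = cscale \<phi> (W (a + b))"
  using assms unfolding grp_basis_def by blast

lemma grp_trace:
  assumes "grp_basis (W :: 'g::{finite,ab_group_add} \<Rightarrow> complex^'m^'m)"
  shows "trace (W m) = (if m = 0 then of_nat CARD('m) else 0)"
proof -
  have w0: "W 0 = mat 1" and t: "trace (adj (W 0) ** W m) = (if 0 = m then of_nat CARD('m) else 0)"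
    using assms unfolding grp_basis_def by blast+
  from t show ?thesis by (simp add: w0)
qed

lemma grp_quad:
  assumes W: "grp_basis (W :: 'g::{finite,ab_group_add} \<Rightarrow> complex^'m^'m)"
  shows "cmod (trace ((adj (W a) ** W b) ** (adj (W c) ** W e))) =
     (if a - b + c - e = 0 then real CARD('m) else 0)"
proof -
  obtain \<alpha> where al: "cmod \<alpha> = 1" "adj (W a) = cscale \<alpha> (W (- a))" using grp_adj[OF W] by blast
  obtain \<gamma> where ga: "cmod \<gamma> = 1" "adj (W c) = cscale \<gamma> (W (- c))" using grp_adj[OF W] by blast
  obtain \<phi>1 where p1: "cmod \<phi>1 = 1" "W (- a) ** W b = cscale \<phi>1 (W (- a + b))" using grp_mult[OF W] by blast
  obtain \<phi>2 where p2: "cmod \<phi>2 = 1" "W (- c) ** W e = cscale \<phi>2 (W (- c + e))" using grp_mult[OF W] by blast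
  obtain \<phi>3 where p3: "cmod \<phi>3 = 1" "W (- a + b) ** W (- c + e) = cscale \<phi>3 (W (- a + b + (- c + e)))" using grp_mult[OF W] by blast
  have "(adj (W a) ** W b) ** (adj (W c) ** W e) = cscale (\<alpha> * \<phi>1 * (\<gamma> * \<phi>2) * \<phi>3) (W (- a + b + (- c + e)))"
    by (simp only: al ga p1 p2 p3 cscale_mm_left cscale_mm_right cscale_cscale mult_ac)
  moreover have "- a + b + (- c + e) = - (a - b + c - e)" by (simp add: algebra_simps)
  then have "(- a + b + (- c + e) = 0) = (a - b + c - e = 0)" by (simp only: neg_equal_0_iff_equal)
  ultimately show ?thesis
    by (simp only: grp_trace[OF W] trace_cscale norm_mult al(1) ga(1) p1(1) p2(1) p3(1)) simp
qed

lemma mult_cnj: "z * cnj z = (complex_of_real (cmod z))^2"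
  by (metis complex_norm_square of_real_power)

lemma grp_parseval:
  fixes W :: "'g::finite \<Rightarrow> complex^'m^'m"
  assumes X: "X = (\<Sum>a\<in>UNIV. cscale (C a) (W a))"
    and C: "\<And>a. C a = trace (adj (W a) ** X) / real CARD('m)"
  shows "Re (trace (adj X ** X)) = real CARD('m) * (\<Sum>a\<in>UNIV. (cmod (C a))^2)"
proof -
  have tc: "trace (adj (W a) ** X) = real CARD('m) * C a" for a
    using C[of a] by simp
  have "trace (adj X ** X) = (\<Sum>a\<in>UNIV. C a * trace (adj X ** W a))"
    by (subst (2) X) (simp add: mm_sum_right trace_sum)
  also have "\<dots> = (\<Sum>a\<in>UNIV. real CARD('m) * (C a * cnj (C a)))"
    by (simp add: trace_adj_swap[of X] tc mult_ac)
  also have "\<dots> = of_real (real CARD('m) * (\<Sum>a\<in>UNIV. (cmod (C a))^2))"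
    by (simp add: mult_cnj sum_distrib_left)
  finally show ?thesis by simp
qed

lemma norm_sum4: "norm (\<Sum>a\<in>A. \<Sum>b\<in>B. \<Sum>c\<in>C. \<Sum>e\<in>E. (f a b c e :: complex)) \<le>
   (\<Sum>a\<in>A. \<Sum>b\<in>B. \<Sum>c\<in>C. \<Sum>e\<in>E. norm (f a b c e))"
  apply (rule order_trans[OF norm_sum], rule sum_mono)
  apply (rule order_trans[OF norm_sum], rule sum_mono)
  apply (rule order_trans[OF norm_sum], rule sum_mono)
  apply (rule norm_sum)
  done

definition Q4 :: "('g::{finite,ab_group_add} \<Rightarrow> real) \<Rightarrow> real" where
  "Q4 r = (\<Sum>a\<in>UNIV. \<Sum>b\<in>UNIV. \<Sum>c\<in>UNIV. \<Sum>e\<in>UNIV.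
      r a * r b * r c * r e * (if a - b + c - e = 0 then 1 else 0))"

lemma grp_quartic:
  assumes W: "grp_basis (W :: 'g::{finite,ab_group_add} \<Rightarrow> complex^'m^'m)"
    and Y: "Y = (\<Sum>a\<in>UNIV. cscale (y a) (W a))"
  shows "Re (trace ((adj Y ** Y) ** (adj Y ** Y))) \<le> real CARD('m) * Q4 (\<lambda>a. cmod (y a))"
proof -
  have "adj Y ** Y = (\<Sum>b\<in>UNIV. \<Sum>a\<in>UNIV. cscale (cnj (y a) * y b) (adj (W a) ** W b))"
    by (simp add: Y adj_sum mm_sum_left mm_sum_right cscale_sum mult_ac)
  also have "\<dots> = (\<Sum>a\<in>UNIV. \<Sum>b\<in>UNIV. cscale (cnj (y a) * y b) (adj (W a) ** W b))"
    by (rule sum.swap)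
  finally have yy: "adj Y ** Y = (\<Sum>a\<in>UNIV. \<Sum>b\<in>UNIV. cscale (cnj (y a) * y b) (adj (W a) ** W b))" .
  have teq: "trace ((adj Y ** Y) ** (adj Y ** Y)) = (\<Sum>a\<in>UNIV. \<Sum>b\<in>UNIV. \<Sum>c\<in>UNIV. \<Sum>e\<in>UNIV.
      (cnj (y a) * y b * (cnj (y c) * y e)) * trace ((adj (W c) ** W e) ** (adj (W a) ** W b)))"
  proof -
    have "(adj Y ** Y) ** (adj Y ** Y) = (\<Sum>a\<in>UNIV. \<Sum>b\<in>UNIV. \<Sum>c\<in>UNIV. \<Sum>e\<in>UNIV.
      cscale (cnj (y a) * y b * (cnj (y c) * y e)) ((adj (W c) ** W e) ** (adj (W a) ** W b)))"
      unfolding yy by (simp only: mm_sum_left mm_sum_right cscale_mm_left cscale_mm_right cscale_sum cscale_cscale)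
    then show ?thesis by (simp only: trace_sum trace_cscale)
  qed
  have "Re (trace ((adj Y ** Y) ** (adj Y ** Y))) \<le> cmod (trace ((adj Y ** Y) ** (adj Y ** Y)))"
    by (rule complex_Re_le_cmod)
  also have "\<dots> \<le> (\<Sum>a\<in>UNIV. \<Sum>b\<in>UNIV. \<Sum>c\<in>UNIV. \<Sum>e\<in>UNIV.
      norm ((cnj (y a) * y b * (cnj (y c) * y e)) * trace ((adj (W c) ** W e) ** (adj (W a) ** W b))))"
    unfolding teq by (rule norm_sum4)
  also have "\<dots> = (\<Sum>a\<in>UNIV. \<Sum>b\<in>UNIV. \<Sum>c\<in>UNIV. \<Sum>e\<in>UNIV. real CARD('m) *
      (cmod (y a) * cmod (y b) * cmod (y c) * cmod (y e) * (if a - b + c - e = 0 then 1 else 0)))"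
  proof (intro sum.cong refl)
    fix a b c e :: 'g
    have e1: "c - e + a - b = a - b + c - e" by (simp add: algebra_simps)
    have "cmod (trace ((adj (W c) ** W e) ** (adj (W a) ** W b))) = (if a - b + c - e = 0 then real CARD('m) else 0)"
      by (simp only: grp_quad[OF W, of c e a b] e1)
    then show "norm ((cnj (y a) * y b * (cnj (y c) * y e)) * trace ((adj (W c) ** W e) ** (adj (W a) ** W b))) =
      real CARD('m) * (cmod (y a) * cmod (y b) * cmod (y c) * cmod (y e) * (if a - b + c - e = 0 then 1 else 0))"
      by (simp add: norm_mult)
  qed
  also have "\<dots> = real CARD('m) * Q4 (\<lambda>a. cmod (y a))"
    by (simp add: Q4_def sum_distrib_left)
  finally show ?thesis .
qed

definition good_chars :: "('g::{finite,ab_group_add} \<Rightarrow> 'g \<Rightarrow> complex) \<Rightarrow> bool" where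
  "good_chars ch \<longleftrightarrow> (\<forall>a b x. ch (a + b) x = ch a x * ch b x) \<and> (\<forall>a x. cmod (ch a x) = 1) \<and>
     (\<forall>a. (\<Sum>x\<in>UNIV. ch a x) = (if a = 0 then of_nat CARD('g) else 0))"

lemma unimod_idem: "cmod z = 1 \<Longrightarrow> z = z * z \<Longrightarrow> z = 1"
  by (metis mult_cancel_left1 norm_zero zero_neq_one)

lemma char_iso_good:
  fixes ch :: "'g::{finite,ab_group_add} \<Rightarrow> 'g \<Rightarrow> complex"
  assumes "char_iso ch" shows "good_chars ch"
proof -
  have hom: "ch (a + b) x = ch a x * ch b x" for a b x
    using assms unfolding char_iso_def by metis
  have isc: "is_character (ch a)" for a
    using assms bij_betw_imp_surj_on unfolding char_iso_def by blast
  have um: "cmod (ch a x) = 1" for a x using isc unfolding is_character_def by blast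
  have ch0: "ch 0 x = 1" for x
    by (rule unimod_idem[OF um]) (use hom[of 0 0 x] in simp)
  have inj: "inj ch" using assms unfolding char_iso_def bij_betw_def by blast
  have s: "(\<Sum>x\<in>UNIV. ch a x) = (if a = 0 then of_nat CARD('g) else 0)" for a
  proof (cases "a = 0")
    case True then show ?thesis by (simp add: ch0)
  next
    case False
    have "ch a \<noteq> ch 0" using inj False by (metis injD)
    then obtain h where h: "ch a h \<noteq> 1" using ch0 by fastforce
    have "(\<Sum>x\<in>UNIV. ch a x) = (\<Sum>x\<in>UNIV. ch a (x + h))"
      by (rule sum.reindex_bij_witness[of _ "\<lambda>x. x + h" "\<lambda>x. x - h"]) auto
    also have "\<dots> = ch a h * (\<Sum>x\<in>UNIV. ch a x)"
      using isc[of a] unfolding is_character_def by (simp add: sum_distrib_left mult.commute)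
    finally have "(1 - ch a h) * (\<Sum>x\<in>UNIV. ch a x) = 0" by (simp add: algebra_simps)
    then show ?thesis using h False by simp
  qed
  show ?thesis unfolding good_chars_def using hom um s by blast
qed

lemma good_hom: "good_chars ch \<Longrightarrow> ch (a + b) x = ch a x * ch b x"
  unfolding good_chars_def by blast
lemma good_um: "good_chars ch \<Longrightarrow> cmod (ch a x) = 1"
  unfolding good_chars_def by blast
lemma good_sum: "good_chars ch \<Longrightarrow> (\<Sum>x\<in>UNIV. ch a x) = (if a = 0 then of_nat CARD('g) else 0)"
  for ch :: "'g::{finite,ab_group_add} \<Rightarrow> 'g \<Rightarrow> complex"
  unfolding good_chars_def by blast
lemma good_zero: "good_chars ch \<Longrightarrow> ch 0 x = 1"
proof -
  assume g: "good_chars ch"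
  show ?thesis
    by (rule unimod_idem[OF good_um[OF g]]) (use good_hom[OF g, of 0 0 x] in simp)
qed
lemma good_cnj: "good_chars ch \<Longrightarrow> cnj (ch a x) = ch (- a) x"
proof -
  assume g: "good_chars ch"
  have "ch a x * ch (- a) x = 1" using good_hom[OF g, of a "- a" x] good_zero[OF g] by simp
  moreover have "ch a x * cnj (ch a x) = 1" using good_um[OF g, of a x]
    by (simp add: mult_cnj)
  ultimately show ?thesis using good_um[OF g, of a x]
    by (metis mult_cancel_left norm_zero zero_neq_one)
qed

lemma good_orth: "good_chars ch \<Longrightarrow> (\<Sum>x\<in>UNIV. ch a x * cnj (ch b x)) = (if a = b then of_nat CARD('g) else 0)"
  for ch :: "'g::{finite,ab_group_add} \<Rightarrow> 'g \<Rightarrow> complex"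
proof -
  assume g: "good_chars ch"
  have "(\<Sum>x\<in>UNIV. ch a x * cnj (ch b x)) = (\<Sum>x\<in>UNIV. ch (a - b) x)"
    by (simp add: good_cnj[OF g] good_hom[OF g, symmetric])
  then show ?thesis by (simp add: good_sum[OF g])
qed

lemma prod_good:
  fixes ch1 :: "'g1::{finite,ab_group_add} \<Rightarrow> 'g1 \<Rightarrow> complex" and ch2 :: "'g2::{finite,ab_group_add} \<Rightarrow> 'g2 \<Rightarrow> complex"
  assumes g1: "good_chars ch1" and g2: "good_chars ch2"
  shows "good_chars (\<lambda>p x. ch1 (fst p) (fst x) * ch2 (snd p) (snd x))"
proof -
  have "(\<Sum>x\<in>UNIV. ch1 (fst p) (fst x) * ch2 (snd p) (snd x)) = (if p = 0 then of_nat CARD('g1 \<times> 'g2) else 0)" for p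
    by (simp add: sum_UNIV_prod sum_product[symmetric] good_sum[OF g1] good_sum[OF g2] prod_eq_iff)
  then show ?thesis unfolding good_chars_def
    by (auto simp: good_hom[OF g1] good_hom[OF g2] good_um[OF g1] good_um[OF g2] norm_mult)
qed

lemma dsum_prod: "(\<Sum>a\<in>A. \<Sum>b\<in>B. f a b) * (\<Sum>c\<in>C. \<Sum>e\<in>E. g c e) =
   (\<Sum>a\<in>A. \<Sum>b\<in>B. \<Sum>c\<in>C. \<Sum>e\<in>E. (f a b * g c e :: complex))"
  by (simp only: sum_distrib_right) (simp only: sum_distrib_left)

lemma cmod4: "complex_of_real ((cmod z)^4) = (z * cnj z) * (z * cnj z)"
proof -
  have "(cmod z)^4 = (cmod z)^2 * (cmod z)^2" by simp
  then show ?thesis by (simp only: of_real_mult of_real_power mult_cnj)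
qed

lemma swap5: "(\<Sum>x\<in>X. \<Sum>a\<in>A. \<Sum>b\<in>B. \<Sum>c\<in>C. \<Sum>e\<in>E. f x a b c e) =
  (\<Sum>a\<in>A. \<Sum>b\<in>B. \<Sum>c\<in>C. \<Sum>e\<in>E. \<Sum>x\<in>X. f x a b c e)"
proof -
  have s0: "(\<Sum>x\<in>X. \<Sum>a\<in>A. \<Sum>b\<in>B. \<Sum>c\<in>C. \<Sum>e\<in>E. f x a b c e) =
      (\<Sum>a\<in>A. \<Sum>b\<in>B. \<Sum>x\<in>X. \<Sum>c\<in>C. \<Sum>e\<in>E. f x a b c e)" by (rule swap2)
  have s1: "\<And>a b. (\<Sum>x\<in>X. \<Sum>c\<in>C. \<Sum>e\<in>E. f x a b c e) = (\<Sum>c\<in>C. \<Sum>e\<in>E. \<Sum>x\<in>X. f x a b c e)"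
    by (rule swap2)
  show ?thesis by (simp only: s0 s1)
qed

lemma gg_expand: "(\<Sum>a\<in>UNIV. c a * ch a x) * cnj (\<Sum>a\<in>UNIV. c a * ch a x) =
   (\<Sum>a\<in>UNIV. \<Sum>b\<in>UNIV. c a * cnj (c b) * (ch a x * cnj (ch b x)))"
  by (simp add: sum_product mult_ac)

lemma char_quad:
  fixes ch :: "'g::{finite,ab_group_add} \<Rightarrow> 'g \<Rightarrow> complex"
  assumes g: "good_chars ch"
  shows "(\<Sum>x\<in>UNIV. (cmod (\<Sum>a\<in>UNIV. c a * ch a x))^2) = real CARD('g) * (\<Sum>a\<in>UNIV. (cmod (c a))^2)"
proof -
  have "complex_of_real (\<Sum>x\<in>UNIV. (cmod (\<Sum>a\<in>UNIV. c a * ch a x))^2) =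
      (\<Sum>x\<in>UNIV. \<Sum>a\<in>UNIV. \<Sum>b\<in>UNIV. c a * cnj (c b) * (ch a x * cnj (ch b x)))"
    by (simp only: of_real_sum of_real_power mult_cnj[symmetric] gg_expand)
  also have "\<dots> = (\<Sum>a\<in>UNIV. \<Sum>b\<in>UNIV. \<Sum>x\<in>UNIV. c a * cnj (c b) * (ch a x * cnj (ch b x)))"
    by (rule swap2)
  also have "\<dots> = (\<Sum>a\<in>UNIV. \<Sum>b\<in>UNIV. c a * cnj (c b) * (if a = b then of_nat CARD('g) else 0))"
    by (simp only: sum_distrib_left[symmetric] good_orth[OF g])
  also have "\<dots> = (\<Sum>a\<in>UNIV. of_nat CARD('g) * (c a * cnj (c a)))"
    by (simp add: if_distrib[of "\<lambda>z. _ * z"] mult_ac cong: if_cong)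
  also have "\<dots> = complex_of_real (real CARD('g) * (\<Sum>a\<in>UNIV. (cmod (c a))^2))"
    by (simp add: mult_cnj sum_distrib_left)
  finally show ?thesis by (simp only: of_real_eq_iff)
qed

lemma char_prod4:
  assumes g: "good_chars ch"
  shows "ch a x * cnj (ch b x) * (ch c x * cnj (ch e x)) = ch (a - b + c - e) x"
proof -
  have "ch a x * cnj (ch b x) * (ch c x * cnj (ch e x)) = ch a x * ch (-b) x * (ch c x * ch (-e) x)"
    by (simp add: good_cnj[OF g])
  also have "\<dots> = ch (a + -b + (c + -e)) x" by (simp only: good_hom[OF g])
  also have "a + -b + (c + -e) = a - b + c - e" by (simp add: algebra_simps)
  finally show ?thesis .
qed

lemma char_quart:
  fixes ch :: "'g::{finite,ab_group_add} \<Rightarrow> 'g \<Rightarrow> complex"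
  assumes g: "good_chars ch"
  shows "(\<Sum>x\<in>UNIV. (cmod (\<Sum>a\<in>UNIV. complex_of_real (r a) * ch a x))^4) = real CARD('g) * Q4 r"
proof -
  let ?c = "\<lambda>a. complex_of_real (r a)"
  have p4: "(cmod z)^4 = ((cmod z)^2)^2" for z by simp
  have "complex_of_real (\<Sum>x\<in>UNIV. (cmod (\<Sum>a\<in>UNIV. ?c a * ch a x))^4) =
    (\<Sum>x\<in>UNIV. ((\<Sum>a\<in>UNIV. ?c a * ch a x) * cnj (\<Sum>a\<in>UNIV. ?c a * ch a x)) *
               ((\<Sum>a\<in>UNIV. ?c a * ch a x) * cnj (\<Sum>a\<in>UNIV. ?c a * ch a x)))"
    by (simp only: of_real_sum cmod4)
  also have "\<dots> = (\<Sum>x\<in>UNIV. \<Sum>a\<in>UNIV. \<Sum>b\<in>UNIV. \<Sum>c\<in>UNIV. \<Sum>e\<in>UNIV.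
      (?c a * cnj (?c b) * (ch a x * cnj (ch b x))) * (?c c * cnj (?c e) * (ch c x * cnj (ch e x))))"
    by (simp only: gg_expand[of "\<lambda>a. complex_of_real (r a)" ch] dsum_prod)
  also have "\<dots> = (\<Sum>a\<in>UNIV. \<Sum>b\<in>UNIV. \<Sum>c\<in>UNIV. \<Sum>e\<in>UNIV. \<Sum>x\<in>UNIV.
      (?c a * cnj (?c b) * (ch a x * cnj (ch b x))) * (?c c * cnj (?c e) * (ch c x * cnj (ch e x))))"
    by (rule swap5)
  also have "\<dots> = (\<Sum>a\<in>UNIV. \<Sum>b\<in>UNIV. \<Sum>c\<in>UNIV. \<Sum>e\<in>UNIV.
      complex_of_real (real CARD('g) * (r a * r b * r c * r e * (if a - b + c - e = 0 then 1 else 0))))"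
  proof (intro sum.cong refl)
    fix a b c e :: 'g
    have "(\<Sum>x\<in>UNIV. (?c a * cnj (?c b) * (ch a x * cnj (ch b x))) * (?c c * cnj (?c e) * (ch c x * cnj (ch e x))))
       = (\<Sum>x\<in>UNIV. (?c a * ?c b * ?c c * ?c e) * ch (a - b + c - e) x)"
      by (intro sum.cong refl) (simp add: char_prod4[OF g, symmetric] mult_ac)
    also have "\<dots> = (?c a * ?c b * ?c c * ?c e) * (if a - b + c - e = 0 then of_nat CARD('g) else 0)"
      by (simp only: sum_distrib_left[symmetric] good_sum[OF g])
    also have "\<dots> = complex_of_real (real CARD('g) * (r a * r b * r c * r e * (if a - b + c - e = 0 then 1 else 0)))"
      by simp
    finally show "(\<Sum>x\<in>UNIV. (?c a * cnj (?c b) * (ch a x * cnj (ch b x))) * (?c c * cnj (?c e) * (ch c x * cnj (ch e x))))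
       = complex_of_real (real CARD('g) * (r a * r b * r c * r e * (if a - b + c - e = 0 then 1 else 0)))" .
  qed
  also have "\<dots> = complex_of_real (real CARD('g) * Q4 r)"
    by (simp only: Q4_def of_real_sum sum_distrib_left)
  finally show ?thesis by (simp only: of_real_eq_iff)
qed

lemma fourier_delta: "fourier ch (delta_fun h) i = cnj (ch i h) / of_nat CARD('g)"
  for ch :: "'g::finite \<Rightarrow> 'g \<Rightarrow> complex"
  by (simp add: fourier_def delta_fun_def if_distrib[of "\<lambda>z. _ * z"] cong: if_cong)

lemma sg_char:
  fixes ch :: "'g::{finite,ab_group_add} \<Rightarrow> 'g \<Rightarrow> complex"
  assumes g: "good_chars ch"
  shows "(\<Sum>h\<in>UNIV. ch a h * classical_sg ch lam t (delta_fun h) x) = exp (lam a * of_real t) * ch a x"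
proof -
  let ?E = "\<lambda>i. exp (lam i * of_real t)" and ?G = "of_nat CARD('g) :: complex"
  have "(\<Sum>h\<in>UNIV. ch a h * classical_sg ch lam t (delta_fun h) x) =
      (\<Sum>h\<in>UNIV. \<Sum>i\<in>UNIV. (?E i * ch i x / ?G) * (ch a h * cnj (ch i h)))"
    by (simp add: classical_sg_def fourier_delta sum_distrib_left mult_ac)
  also have "\<dots> = (\<Sum>i\<in>UNIV. \<Sum>h\<in>UNIV. (?E i * ch i x / ?G) * (ch a h * cnj (ch i h)))"
    by (rule sum.swap)
  also have "\<dots> = (\<Sum>i\<in>UNIV. (?E i * ch i x / ?G) * (if a = i then ?G else 0))"
    by (simp only: sum_distrib_left[symmetric] good_orth[OF g])
  also have "\<dots> = ?E a * ch a x"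
    by (simp add: if_distrib[of "\<lambda>z. _ * z"] cong: if_cong)
  finally show ?thesis .
qed

lemma ft_char:
  fixes ch1 :: "'g1::finite \<Rightarrow> 'g1 \<Rightarrow> complex" and ch2 :: "'g2::finite \<Rightarrow> 'g2 \<Rightarrow> complex"
  assumes K1: "\<And>a x. (\<Sum>h\<in>UNIV. ch1 a h * A (delta_fun h) x) = e1 a * ch1 a x"
    and K2: "\<And>b x. (\<Sum>h\<in>UNIV. ch2 b h * B (delta_fun h) x) = e2 b * ch2 b x"
  shows "fun_tensor A B (\<lambda>x. \<Sum>a\<in>UNIV. \<Sum>b\<in>UNIV. c a b * (ch1 a (fst x) * ch2 b (snd x))) =
     (\<lambda>x. \<Sum>a\<in>UNIV. \<Sum>b\<in>UNIV. (c a b * e1 a * e2 b) * (ch1 a (fst x) * ch2 b (snd x)))"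
proof (rule ext, clarify)
  fix g1 g2
  have "fun_tensor A B (\<lambda>x. \<Sum>a\<in>UNIV. \<Sum>b\<in>UNIV. c a b * (ch1 a (fst x) * ch2 b (snd x))) (g1, g2) =
     (\<Sum>h1\<in>UNIV. \<Sum>h2\<in>UNIV. \<Sum>a\<in>UNIV. \<Sum>b\<in>UNIV.
        c a b * (ch1 a h1 * ch2 b h2) * A (delta_fun h1) g1 * B (delta_fun h2) g2)"
    by (simp add: fun_tensor_def sum_distrib_right)
  also have "\<dots> = (\<Sum>h1\<in>UNIV. \<Sum>a\<in>UNIV. \<Sum>b\<in>UNIV. \<Sum>h2\<in>UNIV.
        c a b * (ch1 a h1 * ch2 b h2) * A (delta_fun h1) g1 * B (delta_fun h2) g2)"
    by (rule sum.cong[OF refl], rule swap2)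
  also have "\<dots> = (\<Sum>a\<in>UNIV. \<Sum>b\<in>UNIV. \<Sum>h1\<in>UNIV. \<Sum>h2\<in>UNIV.
        c a b * (ch1 a h1 * ch2 b h2) * A (delta_fun h1) g1 * B (delta_fun h2) g2)"
    by (rule swap2)
  also have "\<dots> = (\<Sum>a\<in>UNIV. \<Sum>b\<in>UNIV. c a b * (\<Sum>h1\<in>UNIV. ch1 a h1 * A (delta_fun h1) g1) *
        (\<Sum>h2\<in>UNIV. ch2 b h2 * B (delta_fun h2) g2))"
    by (intro sum.cong refl) (simp add: sum_product sum_distrib_left mult_ac)
  also have "\<dots> = (\<Sum>a\<in>UNIV. \<Sum>b\<in>UNIV. (c a b * e1 a * e2 b) * (ch1 a g1 * ch2 b g2))"
    by (simp add: K1 K2 mult_ac)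
  finally show "fun_tensor A B (\<lambda>x. \<Sum>a\<in>UNIV. \<Sum>b\<in>UNIV. c a b * (ch1 a (fst x) * ch2 b (snd x))) (g1, g2) =
     (\<Sum>a\<in>UNIV. \<Sum>b\<in>UNIV. (c a b * e1 a * e2 b) * (ch1 a (fst (g1, g2)) * ch2 b (snd (g1, g2))))" by simp
qed

lemma pow4_powr: "(y::real) \<ge> 0 \<Longrightarrow> (y ^ 4) powr (1/4) = y"
proof (cases "y = 0")
  case False
  assume "y \<ge> 0" then have "y > 0" using False by simp
  have "(y ^ 4) powr (1/4) = (y powr (real 4)) powr (1/4)" using \<open>y > 0\<close> by (simp only: powr_realpow)
  also have "\<dots> = y powr (real 4 * (1/4))" by (rule powr_powr)
  also have "\<dots> = y" using \<open>y > 0\<close> by simp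
  finally show ?thesis .
qed simp

lemma cnorm4_eq: "cnorm 4 f = ((\<Sum>g\<in>UNIV. cmod (f g) ^ 4) / real CARD('g)) powr (1/4)"
  for f :: "'g::finite \<Rightarrow> complex"
  by (simp add: cnorm_def)
lemma cnorm2_eq: "cnorm 2 f = ((\<Sum>g\<in>UNIV. cmod (f g) ^ 2) / real CARD('g)) powr (1/2)"
  for f :: "'g::finite \<Rightarrow> complex"
  by (simp add: cnorm_def)

lemma cnorm_nonneg: "cnorm p f \<ge> 0"
  by (simp add: cnorm_def)

lemma kernel_bdd:
  fixes T :: "('g::finite \<Rightarrow> complex) \<Rightarrow> ('g \<Rightarrow> complex)"
  assumes TK: "\<And>F x. T F x = (\<Sum>h\<in>UNIV. F h * K h x)"
  shows "bdd_above {cnorm 4 (T f) / cnorm 2 f | f. f \<noteq> (\<lambda>_. 0)}"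
proof -
  define M where "M = (\<Sum>h\<in>UNIV. \<Sum>x\<in>UNIV. cmod (K h x))"
  define N where "N = real CARD('g)"
  have N: "N > 0" unfolding N_def by simp
  have M: "M \<ge> 0" unfolding M_def by (intro sum_nonneg) auto
  have "cnorm 4 (T f) / cnorm 2 f \<le> M * sqrt N" if f: "f \<noteq> (\<lambda>_. 0)" for f
  proof -
    define S where "S = (\<Sum>x\<in>UNIV. (cmod (f x))^2)"
    obtain x0 where "f x0 \<noteq> 0" using f by auto
    have "(cmod (f x0))^2 \<le> S" unfolding S_def
      by (rule member_le_sum) auto
    moreover have "(cmod (f x0))^2 > 0" using \<open>f x0 \<noteq> 0\<close> by simp
    ultimately have S: "S > 0" by (meson less_le_trans)
    have fh: "cmod (f h) \<le> sqrt S" for h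
    proof -
      have "(cmod (f h))^2 \<le> S" unfolding S_def by (rule member_le_sum) auto
      then show ?thesis by (simp add: real_le_rsqrt)
    qed
    have Tx: "cmod (T f x) \<le> sqrt S * M" for x
    proof -
      have "cmod (T f x) \<le> (\<Sum>h\<in>UNIV. cmod (f h) * cmod (K h x))"
        unfolding TK by (rule order_trans[OF norm_sum]) (simp add: norm_mult)
      also have "\<dots> \<le> (\<Sum>h\<in>UNIV. sqrt S * cmod (K h x))"
        by (intro sum_mono mult_right_mono fh) auto
      also have "\<dots> = sqrt S * (\<Sum>h\<in>UNIV. cmod (K h x))" by (simp add: sum_distrib_left)
      also have "\<dots> \<le> sqrt S * M" unfolding M_def
        using S by (intro mult_left_mono) (auto intro!: sum_mono member_le_sum)
      finally show ?thesis .
    qed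
    have "(\<Sum>x\<in>UNIV. cmod (T f x) ^ 4) \<le> (\<Sum>x\<in>(UNIV::'g set). (sqrt S * M) ^ 4)"
      by (rule sum_mono, rule power_mono[OF Tx]) auto
    then have "(\<Sum>x\<in>UNIV. cmod (T f x) ^ 4) / N \<le> (\<Sum>x\<in>(UNIV::'g set). (sqrt S * M) ^ 4) / N"
      using N by (intro divide_right_mono) auto
    also have "\<dots> = (sqrt S * M) ^ 4" using N by (simp add: N_def)
    finally have "cnorm 4 (T f) \<le> ((sqrt S * M) ^ 4) powr (1/4)"
      unfolding cnorm4_eq N_def by (intro powr_mono2) (auto intro!: sum_nonneg divide_nonneg_pos)
    also have "\<dots> = sqrt S * M" using M S by (intro pow4_powr) auto
    finally have c4: "cnorm 4 (T f) \<le> sqrt S * M" .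
    have c2: "cnorm 2 f = sqrt S / sqrt N"
      unfolding cnorm2_eq S_def N_def by (subst powr_half_sqrt) (auto intro!: divide_nonneg_pos sum_nonneg simp: real_sqrt_divide)
    have "cnorm 4 (T f) / cnorm 2 f \<le> (sqrt S * M) / (sqrt S / sqrt N)"
      unfolding c2 by (rule divide_right_mono[OF c4]) (use S N in simp)
    also have "\<dots> = M * sqrt N" using S by simp
    finally show ?thesis .
  qed
  then show ?thesis unfolding bdd_above_def by blast
qed

lemma lam_real:
  fixes U :: "'g::{finite,ab_group_add} \<Rightarrow> complex^'n^'n"
  assumes rev: "reversible_so L" and acu: "acu_eigenbasis L U lam"
  shows "lam a = complex_of_real (Re (lam a))"
proof -
  have ev: "L (U a) = cscale (lam a) (U a)" using acu unfolding acu_eigenbasis_def by blast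
  have tr: "trace (adj (U a) ** U a) = of_nat CARD('n)" using acu_orth[OF acu, of a a] by simp
  have "trace (adj (L (U a)) ** U a) = trace (adj (U a) ** L (U a))"
    using rev unfolding reversible_so_def by blast
  then have "cnj (lam a) * of_nat CARD('n) = lam a * of_nat CARD('n)"
    by (simp add: ev tr)
  then have "cnj (lam a) = lam a" by simp
  then have "Im (lam a) = 0" by (simp add: complex_eq_iff)
  then show ?thesis by (simp add: complex_eq_iff)
qed

lemma re_trace_nonneg: "Re (trace ((adj Y ** Y) ** (adj Y ** Y))) \<ge> 0"
  for Y :: "complex^'m^'m"
proof -
  have "adj (adj Y ** Y) = adj Y ** Y" by (simp add: adj_mm)
  then have "Re (trace ((adj Y ** Y) ** (adj Y ** Y))) = (adj Y ** Y) \<bullet> (adj Y ** Y)"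
    by (simp add: inner_mat)
  then show ?thesis by simp
qed

lemma ft_kernel: "fun_tensor A B F x = (\<Sum>h\<in>UNIV. F h * (A (delta_fun (fst h)) (fst x) * B (delta_fun (snd h)) (snd x)))"
  by (cases x) (simp add: fun_tensor_def sum_UNIV_prod mult_ac)

theorem mainTheorem20:
  fixes L1 :: "complex^'n1^'n1 \<Rightarrow> complex^'n1^'n1"
    and L2 :: "complex^'n2^'n2 \<Rightarrow> complex^'n2^'n2"
    and U1 :: "'g1::{finite,ab_group_add} \<Rightarrow> complex^'n1^'n1"
    and U2 :: "'g2::{finite,ab_group_add} \<Rightarrow> complex^'n2^'n2"
    and lam1 :: "'g1 \<Rightarrow> complex" and lam2 :: "'g2 \<Rightarrow> complex"
    and chi1 :: "'g1 \<Rightarrow> 'g1 \<Rightarrow> complex" and chi2 :: "'g2 \<Rightarrow> 'g2 \<Rightarrow> complex"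
    and t :: real
  assumes "liouvillian L1" "unital_so L1" "reversible_so L1"
    and "liouvillian L2" "unital_so L2" "reversible_so L2"
    and "acu_eigenbasis L1 U1 lam1" "acu_eigenbasis L2 U2 lam2"
    and "char_iso chi1" "char_iso chi2"
    and "t \<ge> 0"
  shows "qnorm_2to4 (super_tensor (exp_so t L1) (exp_so t L2))
           \<le> cnorm_2to4 (fun_tensor (classical_sg chi1 lam1 t) (classical_sg chi2 lam2 t))"
proof -
  have lin1: "clinear_so L1" using assms(1) unfolding liouvillian_def by blast
  have lin2: "clinear_so L2" using assms(4) unfolding liouvillian_def by blast
  have acu1: "acu_eigenbasis L1 U1 lam1" and acu2: "acu_eigenbasis L2 U2 lam2" using assms by auto
  have ev1: "\<And>a. L1 (U1 a) = cscale (lam1 a) (U1 a)" using acu1 unfolding acu_eigenbasis_def by blast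
  have ev2: "\<And>a. L2 (U2 a) = cscale (lam2 a) (U2 a)" using acu2 unfolding acu_eigenbasis_def by blast
  define e1 where "e1 = (\<lambda>a. exp (lam1 a * of_real t))"
  define e2 where "e2 = (\<lambda>a. exp (lam2 a * of_real t))"
  have E1: "\<And>X. exp_so t L1 X = (\<Sum>a\<in>UNIV. cscale (trace (adj (U1 a) ** X) / real CARD('n1) * e1 a) (U1 a))"
    unfolding e1_def by (rule exp_so_expand[OF lin1 ev1 acu_expand[OF acu1]])
  have E2: "\<And>X. exp_so t L2 X = (\<Sum>a\<in>UNIV. cscale (trace (adj (U2 a) ** X) / real CARD('n2) * e2 a) (U2 a))"
    unfolding e2_def by (rule exp_so_expand[OF lin2 ev2 acu_expand[OF acu2]])
  define W :: "'g1 \<times> 'g2 \<Rightarrow> complex^('n1\<times>'n2)^('n1\<times>'n2)" where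
    "W = (\<lambda>p. kron (U1 (fst p)) (U2 (snd p)))"
  have gW: "grp_basis W"
    unfolding W_def by (rule kron_grp_basis[OF acu_grp_basis[OF acu1] acu_grp_basis[OF acu2]])
  have c1: "CARD('g1) = CARD('n1)^2" using acu1 unfolding acu_eigenbasis_def by blast
  have c2: "CARD('g2) = CARD('n2)^2" using acu2 unfolding acu_eigenbasis_def by blast
  have cardW: "CARD('g1 \<times> 'g2) = CARD('n1 \<times> 'n2)^2" by (simp add: c1 c2 power_mult_distrib)
  have orthW: "\<And>a b. trace (adj (W a) ** W b) = (if a = b then complex_of_real (real CARD('n1 \<times> 'n2)) else 0)"
  proof -
    fix a b
    have "trace (adj (W a) ** W b) = (if a = b then of_nat CARD('n1 \<times> 'n2) else 0)"
      using gW unfolding grp_basis_def by blast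
    then show "trace (adj (W a) ** W b) = (if a = b then complex_of_real (real CARD('n1 \<times> 'n2)) else 0)"
      by simp
  qed
  have lr1: "\<And>a. lam1 a = complex_of_real (Re (lam1 a))" by (rule lam_real[OF assms(3) acu1])
  have lr2: "\<And>a. lam2 a = complex_of_real (Re (lam2 a))" by (rule lam_real[OF assms(6) acu2])
  define rho where "rho = (\<lambda>p::'g1\<times>'g2. exp (Re (lam1 (fst p)) * t) * exp (Re (lam2 (snd p)) * t))"
  have rho_pos: "\<And>p. rho p > 0" unfolding rho_def by simp
  have ee: "\<And>p. e1 (fst p) * e2 (snd p) = complex_of_real (rho p)"
  proof -
    fix p :: "'g1 \<times> 'g2"
    have "e1 (fst p) = complex_of_real (exp (Re (lam1 (fst p)) * t))"
      unfolding e1_def by (subst lr1) (simp only: of_real_mult[symmetric] exp_of_real)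
    moreover have "e2 (snd p) = complex_of_real (exp (Re (lam2 (snd p)) * t))"
      unfolding e2_def by (subst lr2) (simp only: of_real_mult[symmetric] exp_of_real)
    ultimately show "e1 (fst p) * e2 (snd p) = complex_of_real (rho p)"
      unfolding rho_def by simp
  qed
  define chp where "chp = (\<lambda>(p::'g1\<times>'g2) (x::'g1\<times>'g2). chi1 (fst p) (fst x) * chi2 (snd p) (snd x))"
  have g1: "good_chars chi1" by (rule char_iso_good[OF assms(9)])
  have g2: "good_chars chi2" by (rule char_iso_good[OF assms(10)])
  have gp: "good_chars chp" unfolding chp_def by (rule prod_good[OF g1 g2])
  define T where "T = fun_tensor (classical_sg chi1 lam1 t) (classical_sg chi2 lam2 t)"
  have key: "\<exists>a\<in>{cnorm 4 (T f) / cnorm 2 f | f. f \<noteq> (\<lambda>_. 0)}. qnorm4 (super_tensor (exp_so t L1) (exp_so t L2) X) / qnorm2 X \<le> a"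
    if X0: "X \<noteq> 0" for X
  proof -
    define C where "C = (\<lambda>p. trace (adj (W p) ** X) / real CARD('n1 \<times> 'n2))"
    have Xe: "X = (\<Sum>p\<in>UNIV. cscale (C p) (W p))"
      unfolding C_def by (rule mat_expand[OF orthW _ cardW]) simp
    define Y where "Y = super_tensor (exp_so t L1) (exp_so t L2) X"
    have Ye: "Y = (\<Sum>p\<in>UNIV. cscale (complex_of_real (rho p) * C p) (W p))"
    proof -
      have "Y = (\<Sum>a\<in>UNIV. \<Sum>b\<in>UNIV.
         cscale (e1 a * e2 b * trace (adj (kron (U1 a) (U2 b)) ** X) / (real CARD('n1) * real CARD('n2)))
            (kron (U1 a) (U2 b)))"
        unfolding Y_def by (rule super_tensor_expand[OF E1 E2])
      also have "\<dots> = (\<Sum>p\<in>UNIV. cscale (e1 (fst p) * e2 (snd p) * C p) (W p))"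
        by (simp add: sum_UNIV_prod C_def W_def)
      finally show ?thesis by (simp add: ee)
    qed
    define r where "r = (\<lambda>p. cmod (C p))"
    have q2: "qnorm2 X = (\<Sum>p\<in>UNIV. (r p)^2) powr (1/2)"
    proof -
      have "Re (trace (adj X ** X)) = real CARD('n1 \<times> 'n2) * (\<Sum>p\<in>UNIV. (cmod (C p))^2)"
        by (rule grp_parseval[OF Xe]) (simp add: C_def)
      then show ?thesis unfolding qnorm2_def r_def by simp
    qed
    have q4: "qnorm4 Y \<le> (Q4 (\<lambda>p. rho p * r p)) powr (1/4)"
    proof -
      have "Re (trace ((adj Y ** Y) ** (adj Y ** Y))) \<le> real CARD('n1 \<times> 'n2) * Q4 (\<lambda>p. cmod (complex_of_real (rho p) * C p))"
        by (rule grp_quartic[OF gW Ye])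
      also have "(\<lambda>p. cmod (complex_of_real (rho p) * C p)) = (\<lambda>p. rho p * r p)"
      proof (rule ext)
        fix p
        show "cmod (complex_of_real (rho p) * C p) = rho p * r p"
          using rho_pos[of p] by (simp add: r_def norm_mult)
      qed
      finally have "Re (trace ((adj Y ** Y) ** (adj Y ** Y))) / real CARD('n1 \<times> 'n2) \<le> Q4 (\<lambda>p. rho p * r p)"
        by (simp add: divide_le_eq mult.commute)
      then show ?thesis unfolding qnorm4_def
        by (intro powr_mono2) (auto intro!: divide_nonneg_pos re_trace_nonneg)
    qed
    define f where "f = (\<lambda>x. \<Sum>p\<in>UNIV. complex_of_real (r p) * chp p x)"
    have Tf: "T f = (\<lambda>x. \<Sum>p\<in>UNIV. complex_of_real (rho p * r p) * chp p x)"
    proof -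
      have fd: "f = (\<lambda>x. \<Sum>a\<in>UNIV. \<Sum>b\<in>UNIV. complex_of_real (r (a,b)) * (chi1 a (fst x) * chi2 b (snd x)))"
        unfolding f_def chp_def by (simp add: sum_UNIV_prod)
      have "T f = (\<lambda>x. \<Sum>a\<in>UNIV. \<Sum>b\<in>UNIV. (complex_of_real (r (a,b)) * exp (lam1 a * of_real t) * exp (lam2 b * of_real t))
          * (chi1 a (fst x) * chi2 b (snd x)))"
        unfolding T_def fd by (rule ft_char[OF sg_char[OF g1] sg_char[OF g2]])
      also have "\<dots> = (\<lambda>x. \<Sum>p\<in>UNIV. complex_of_real (rho p * r p) * chp p x)"
      proof (rule ext)
        fix x
        have h: "\<And>a b. complex_of_real (r (a,b)) * exp (lam1 a * of_real t) * exp (lam2 b * of_real t) =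
            complex_of_real (rho (a,b) * r (a,b))"
          using ee unfolding e1_def e2_def by (metis fst_conv mult.assoc mult.commute of_real_mult snd_conv)
        show "(\<Sum>a\<in>UNIV. \<Sum>b\<in>UNIV. (complex_of_real (r (a,b)) * exp (lam1 a * of_real t) * exp (lam2 b * of_real t))
          * (chi1 a (fst x) * chi2 b (snd x))) = (\<Sum>p\<in>UNIV. complex_of_real (rho p * r p) * chp p x)"
          by (simp only: sum_UNIV_prod chp_def fst_conv snd_conv h)
      qed
      finally show ?thesis .
    qed
    have sq: "(\<Sum>x\<in>UNIV. (cmod (f x))^2) = real CARD('g1 \<times> 'g2) * (\<Sum>p\<in>UNIV. (r p)^2)"
      unfolding f_def by (simp add: char_quad[OF gp])
    have cn2: "cnorm 2 f = (\<Sum>p\<in>UNIV. (r p)^2) powr (1/2)"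
      unfolding cnorm2_eq sq by simp
    have cn4: "cnorm 4 (T f) = (Q4 (\<lambda>p. rho p * r p)) powr (1/4)"
    proof -
      have qq: "(\<Sum>x\<in>UNIV. (cmod (\<Sum>p\<in>UNIV. complex_of_real (rho p * r p) * chp p x))^4) = real CARD('g1 \<times> 'g2) * Q4 (\<lambda>p. rho p * r p)"
        by (rule char_quart[OF gp])
      show ?thesis by (simp only: cnorm4_eq Tf qq) simp
    qed
    have fnz: "f \<noteq> (\<lambda>_. 0)"
    proof
      assume "f = (\<lambda>_. 0)"
      then have "(\<Sum>p\<in>UNIV. (r p)^2) = 0" using sq by simp
      then have "\<And>p. r p = 0" by (simp add: sum_nonneg_eq_0_iff) (metis prod.collapse)
      then have "\<And>p. C p = 0" by (simp add: r_def)
      then have "X = 0" by (subst Xe) simp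
      then show False using X0 by simp
    qed
    have "qnorm4 Y / qnorm2 X \<le> cnorm 4 (T f) / cnorm 2 f"
      unfolding cn4 cn2 q2[symmetric] by (rule divide_right_mono[OF q4]) (simp add: qnorm2_def)
    then show ?thesis using fnz unfolding Y_def by blast
  qed
  have ne: "{qnorm4 (super_tensor (exp_so t L1) (exp_so t L2) X) / qnorm2 X | X. X \<noteq> 0} \<noteq> {}"
  proof -
    obtain i :: "'n1 \<times> 'n2" where True by blast
    have "(mat 1 :: complex^('n1\<times>'n2)^('n1\<times>'n2)) $ i $ i = 1" by (simp add: mat_def)
    then have "(mat 1 :: complex^('n1\<times>'n2)^('n1\<times>'n2)) \<noteq> 0" by auto
    then show ?thesis by blast
  qed
  have bdd: "bdd_above {cnorm 4 (T f) / cnorm 2 f | f. f \<noteq> (\<lambda>_. 0)}"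
    unfolding T_def by (rule kernel_bdd) (rule ft_kernel)
  show ?thesis
    unfolding qnorm_2to4_def cnorm_2to4_def T_def[symmetric]
    by (rule cSup_mono[OF ne bdd]) (use key in blast)
qed

end
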